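(* Let $\mathscr{A}\in\mathbb{R}^{n_1\times n_2\times n_3}$, $\mathscr{B}\in\mathbb{R}^{n_1\times s\times n_3}$, and suppose $k$ steps of the tensor tubal-global Golub–Kahan algorithm described in the context have been run (without breakdown). Then $$\mathscr{A}\star\mathbb{V}_k=\mathbb{U}_{k+1}\star(\widetilde{\mathscr{C}}_k\circledast\mathscr{I}_{ssn_3})=\mathbb{U}_k\star(\mathscr{C}_k\circledast\mathscr{I}_{ssn_3})+\mathscr{U}_{k+1}\star((\mathbf{a}_{k+1}\star\mathscr{E}_k)\circledast\mathscr{I}_{ssn_3}),$$ $$\mathscr{A}^T\star\mathbb{U}_k=\mathbb{V}_k\star(\mathscr{C}_k^T\circledast\mathscr{I}_{ssn_3}),\qquad \mathscr{B}=\mathbb{U}_{k+1}\star((\mathscr{E}_1^{(k+1)}\star\mathbf{a}_1)\circledast\mathscr{I}_{ssn_3}).$$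
   Context: All tensors are real third-order arrays. $\widehat{\mathscr{A}}=\mathscr{A}\times_3F_{n_3}$ denotes the tensor obtained by applying the discrete Fourier transform ($F_{n_3}$ with entries $\omega^{(i-1)(j-1)}$, $\omega=e^{-2\pi\mathrm{i}/n_3}$) to each tube; its frontal slices $\hat A^{(k)}$ are the Fourier slices. T-product: $\mathscr{A}\star\mathscr{B}$ has Fourier slices $\hat A^{(k)}\hat B^{(k)}$. Transpose $\mathscr{A}^T$: transpose each frontal slice and reverse the order of frontal slices $2,\dots,n_3$. $\mathscr{I}_{ssn_3}$: first frontal slice $I_s$, others zero. T-Kronecker product $\mathscr{A}\circledast\mathscr{B}$: Fourier slices $\hat A^{(k)}\otimes\hat B^{(k)}$. A tube is an element of $\mathbb{R}^{1\times1\times n_3}$; $\mathbf{e}$ has entries $(1,0,\dots,0)$, $\mathbf{o}$ is the zero tube. For a tube $\mathbf{a}$, $\mathbf{a}\divideontimes\mathscr{W}$ has $(i,j)$ tube $\mathbf{a}\star\mathscr{W}(i,j,:)$. Normalization of $\mathscr{W}$: $\mathbf{a}$ is the tube with $k$-th Fourier coefficient $\|\hat W^{(k)}\|_F$ (breakdown if one is zero) and $\mathscr{Q}$ has Fourier slices $\hat W^{(k)}/\|\hat W^{(k)}\|_F$; output $[\mathscr{Q},\mathbf{a}]$. Tubal-global Golub–Kahan algorithm: $\mathscr{V}_0=0\in\mathbb{R}^{n_2\times s\times n_3}$, $[\mathscr{U}_1,\mathbf{a}_1]=\mathrm{Normalization}(\mathscr{B})$; for $j=1,\dots,k$: $\widetilde{\mathscr{V}}=\mathscr{A}^T\star\mathscr{U}_j-\mathbf{a}_j\divideontimes\mathscr{V}_{j-1}$,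 $[\mathscr{V}_j,\mathbf{b}_j]=\mathrm{Normalization}(\widetilde{\mathscr{V}})$, $\widetilde{\mathscr{U}}=\mathscr{A}\star\mathscr{V}_j-\mathbf{b}_j\divideontimes\mathscr{U}_j$, $[\mathscr{U}_{j+1},\mathbf{a}_{j+1}]=\mathrm{Normalization}(\widetilde{\mathscr{U}})$. Notation: $\mathbb{V}_k=[\mathscr{V}_1,\dots,\mathscr{V}_k]\in\mathbb{R}^{n_2\times ks\times n_3}$, $\mathbb{U}_k=[\mathscr{U}_1,\dots,\mathscr{U}_k]$, $\mathbb{U}_{k+1}=[\mathbb{U}_k,\mathscr{U}_{k+1}]$ (concatenation along mode 2). $\widetilde{\mathscr{C}}_k\in\mathbb{R}^{(k+1)\times k\times n_3}$ is the bidiagonal tensor whose $(j,j)$ tube is $\mathbf{b}_j$, whose $(j+1,j)$ tube is $\mathbf{a}_{j+1}$ ($j=1,\dots,k$), and all other tubes are $\mathbf{o}$; $\mathscr{C}_k\in\mathbb{R}^{k\times k\times n_3}$ is obtained by deleting its last horizontal slice. $\mathscr{E}_k=[\mathbf{o},\dots,\mathbf{o},\mathbf{e}]\in\mathbb{R}^{1\times k\times n_3}$ and $\mathscr{E}_1^{(k+1)}=[\mathbf{e};\mathbf{o};\dots;\mathbf{o}]\in\mathbb{R}^{(k+1)\times1\times n_3}$. *)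

theory Defs
  imports Complex_Main
begin

text \<open>A real third-order tensor of size m x n x n3 is represented as a function
  of three 0-based indices; only the entries with indices in range matter.
  Complex tensors (Fourier domain) likewise.\<close>

type_synonym tensor = "nat \<Rightarrow> nat \<Rightarrow> nat \<Rightarrow> real"
type_synonym ctensor = "nat \<Rightarrow> nat \<Rightarrow> nat \<Rightarrow> complex"

definition teq :: "nat \<Rightarrow> nat \<Rightarrow> nat \<Rightarrow> tensor \<Rightarrow> tensor \<Rightarrow> bool" where
  "teq m n n3 X Y \<longleftrightarrow> (\<forall>i<m. \<forall>j<n. \<forall>t<n3. X i j t = Y i j t)"

definition tadd :: "tensor \<Rightarrow> tensor \<Rightarrow> tensor" where
  "tadd X Y = (\<lambda>i j t. X i j t + Y i j t)"

definition tsub :: "tensor \<Rightarrow> tensor \<Rightarrow> tensor" where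
  "tsub X Y = (\<lambda>i j t. X i j t - Y i j t)"

definition omega :: "nat \<Rightarrow> complex" where
  "omega n3 = cis (- 2 * pi / real n3)"

definition tfft :: "nat \<Rightarrow> tensor \<Rightarrow> ctensor" where
  "tfft n3 A = (\<lambda>i j k. \<Sum>t<n3. complex_of_real (A i j t) * omega n3 ^ (k * t))"

text \<open>Inverse DFT along the tubes (real part; applied only to Fourier data of real tensors).\<close>
definition tifft :: "nat \<Rightarrow> ctensor \<Rightarrow> tensor" where
  "tifft n3 X = (\<lambda>i j t. Re ((1 / of_nat n3) * (\<Sum>k<n3. X i j k * inverse (omega n3) ^ (t * k))))"

definition tprod :: "nat \<Rightarrow> nat \<Rightarrow> tensor \<Rightarrow> tensor \<Rightarrow> tensor" where
  "tprod m n3 A B = tifft n3 (\<lambda>i j k. \<Sum>l<m. tfft n3 A i l k * tfft n3 B l j k)"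

text \<open>Tensor transpose: transpose each frontal slice, reverse slices 2..n3.\<close>
definition ttrans :: "nat \<Rightarrow> tensor \<Rightarrow> tensor" where
  "ttrans n3 A = (\<lambda>i j t. A j i ((n3 - t) mod n3))"

definition tid :: "tensor" where
  "tid = (\<lambda>i j t. if i = j \<and> t = 0 then 1 else 0)"

definition tkron :: "nat \<Rightarrow> nat \<Rightarrow> nat \<Rightarrow> tensor \<Rightarrow> tensor \<Rightarrow> tensor" where
  "tkron p q n3 A B = tifft n3 (\<lambda>I J k.
      tfft n3 A (I div p) (J div q) k * tfft n3 B (I mod p) (J mod q) k)"

definition etube :: tensor where
  "etube = (\<lambda>i j t. if t = 0 then 1 else 0)"

definition otube :: tensor where
  "otube = (\<lambda>i j t. 0)"

definition tubemul :: "nat \<Rightarrow> tensor \<Rightarrow> tensor \<Rightarrow> tensor" where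
  "tubemul n3 a W = (\<lambda>i j t. tprod 1 n3 a (\<lambda>_ _ t'. W i j t') 0 0 t)"

definition fnorm :: "nat \<Rightarrow> nat \<Rightarrow> ctensor \<Rightarrow> nat \<Rightarrow> real" where
  "fnorm m n X k = sqrt (\<Sum>i<m. \<Sum>j<n. (cmod (X i j k))\<^sup>2)"

definition tnormalize :: "nat \<Rightarrow> nat \<Rightarrow> nat \<Rightarrow> tensor \<Rightarrow> tensor \<times> tensor" where
  "tnormalize m n n3 W =
     (tifft n3 (\<lambda>i j k. tfft n3 W i j k / complex_of_real (fnorm m n (tfft n3 W) k)),
      tifft n3 (\<lambda>i j k. complex_of_real (fnorm m n (tfft n3 W) k)))"

definition nobreak :: "nat \<Rightarrow> nat \<Rightarrow> nat \<Rightarrow> tensor \<Rightarrow> bool" where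
  "nobreak m n n3 W \<longleftrightarrow> (\<forall>k<n3. fnorm m n (tfft n3 W) k \<noteq> 0)"

text \<open>Tubal-global Golub-Kahan, A of size n1 x n2 x n3, B of size n1 x s x n3.
  gk ... j = (V_j, U_{j+1}, a_{j+1}, b_j)  (b_0 is a dummy value).\<close>
primrec gk :: "nat \<Rightarrow> nat \<Rightarrow> nat \<Rightarrow> nat \<Rightarrow> tensor \<Rightarrow> tensor \<Rightarrow> nat
                 \<Rightarrow> tensor \<times> tensor \<times> tensor \<times> tensor" where
  "gk n1 n2 n3 s A B 0 =
     (\<lambda>i j t. 0, fst (tnormalize n1 s n3 B), snd (tnormalize n1 s n3 B), \<lambda>i j t. 0)"
| "gk n1 n2 n3 s A B (Suc j) =
     (let (V, U, a, _) = gk n1 n2 n3 s A B j;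
          Vt = tsub (tprod n1 n3 (ttrans n3 A) U) (tubemul n3 a V);
          (V', b') = tnormalize n2 s n3 Vt;
          Ut = tsub (tprod n2 n3 A V') (tubemul n3 b' U);
          (U', a') = tnormalize n1 s n3 Ut
      in (V', U', a', b'))"

text \<open>U_j, a_j (j \<ge> 1) and V_j, b_j (j \<ge> 0; V_0 = 0).\<close>
definition gkU :: "nat \<Rightarrow> nat \<Rightarrow> nat \<Rightarrow> nat \<Rightarrow> tensor \<Rightarrow> tensor \<Rightarrow> nat \<Rightarrow> tensor" where
  "gkU n1 n2 n3 s A B j = fst (snd (gk n1 n2 n3 s A B (j - 1)))"

definition gka :: "nat \<Rightarrow> nat \<Rightarrow> nat \<Rightarrow> nat \<Rightarrow> tensor \<Rightarrow> tensor \<Rightarrow> nat \<Rightarrow> tensor" where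
  "gka n1 n2 n3 s A B j = fst (snd (snd (gk n1 n2 n3 s A B (j - 1))))"

definition gkV :: "nat \<Rightarrow> nat \<Rightarrow> nat \<Rightarrow> nat \<Rightarrow> tensor \<Rightarrow> tensor \<Rightarrow> nat \<Rightarrow> tensor" where
  "gkV n1 n2 n3 s A B j = fst (gk n1 n2 n3 s A B j)"

definition gkb :: "nat \<Rightarrow> nat \<Rightarrow> nat \<Rightarrow> nat \<Rightarrow> tensor \<Rightarrow> tensor \<Rightarrow> nat \<Rightarrow> tensor" where
  "gkb n1 n2 n3 s A B j = snd (snd (snd (gk n1 n2 n3 s A B j)))"

definition gkVt :: "nat \<Rightarrow> nat \<Rightarrow> nat \<Rightarrow> nat \<Rightarrow> tensor \<Rightarrow> tensor \<Rightarrow> nat \<Rightarrow> tensor" where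
  "gkVt n1 n2 n3 s A B j =
     tsub (tprod n1 n3 (ttrans n3 A) (gkU n1 n2 n3 s A B j))
      (tubemul n3 (gka n1 n2 n3 s A B j) (gkV n1 n2 n3 s A B (j - 1)))"

definition gkUt :: "nat \<Rightarrow> nat \<Rightarrow> nat \<Rightarrow> nat \<Rightarrow> tensor \<Rightarrow> tensor \<Rightarrow> nat \<Rightarrow> tensor" where
  "gkUt n1 n2 n3 s A B j =
     tsub (tprod n2 n3 A (gkV n1 n2 n3 s A B j))
      (tubemul n3 (gkb n1 n2 n3 s A B j) (gkU n1 n2 n3 s A B j))"

definition gk_no_breakdown :: "nat \<Rightarrow> nat \<Rightarrow> nat \<Rightarrow> nat \<Rightarrow> tensor \<Rightarrow> tensor \<Rightarrow> nat \<Rightarrow> bool" where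
  "gk_no_breakdown n1 n2 n3 s A B k \<longleftrightarrow>
     nobreak n1 s n3 B \<and>
     (\<forall>j\<in>{1..k}. nobreak n2 s n3 (gkVt n1 n2 n3 s A B j) \<and>
                  nobreak n1 s n3 (gkUt n1 n2 n3 s A B j))"

text \<open>Concatenations along mode 2: \<bbbU>_k = [U_1,...,U_k] (n1 x ks x n3),
  \<bbbV>_k = [V_1,...,V_k] (n2 x ks x n3).\<close>
definition bbU :: "nat \<Rightarrow> nat \<Rightarrow> nat \<Rightarrow> nat \<Rightarrow> tensor \<Rightarrow> tensor \<Rightarrow> nat \<Rightarrow> tensor" where
  "bbU n1 n2 n3 s A B k = (\<lambda>i c t. gkU n1 n2 n3 s A B (c div s + 1) i (c mod s) t)"

definition bbV :: "nat \<Rightarrow> nat \<Rightarrow> nat \<Rightarrow> nat \<Rightarrow> tensor \<Rightarrow> tensor \<Rightarrow> nat \<Rightarrow> tensor" where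
  "bbV n1 n2 n3 s A B k = (\<lambda>i c t. gkV n1 n2 n3 s A B (c div s + 1) i (c mod s) t)"

definition gkCt :: "nat \<Rightarrow> nat \<Rightarrow> nat \<Rightarrow> nat \<Rightarrow> tensor \<Rightarrow> tensor \<Rightarrow> nat \<Rightarrow> tensor" where
  "gkCt n1 n2 n3 s A B k = (\<lambda>r c t.
     if r = c then gkb n1 n2 n3 s A B (c + 1) 0 0 t
     else if r = c + 1 then gka n1 n2 n3 s A B (c + 2) 0 0 t
     else otube 0 0 t)"

definition gkC :: "nat \<Rightarrow> nat \<Rightarrow> nat \<Rightarrow> nat \<Rightarrow> tensor \<Rightarrow> tensor \<Rightarrow> nat \<Rightarrow> tensor" where
  "gkC n1 n2 n3 s A B k = (\<lambda>r c t. if r < k then gkCt n1 n2 n3 s A B k r c t else 0)"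

definition Ek :: "nat \<Rightarrow> tensor" where
  "Ek k = (\<lambda>r c t. if c = k - 1 then etube 0 0 t else otube 0 0 t)"

definition E1 :: "tensor" where
  "E1 = (\<lambda>r c t. if r = 0 then etube 0 0 t else otube 0 0 t)"

end

theory Submission
  imports Defs
begin

definition csym :: "nat \<Rightarrow> ctensor \<Rightarrow> bool" where
  "csym n X \<longleftrightarrow> (\<forall>i j k. k < n \<longrightarrow> X i j ((n - k) mod n) = cnj (X i j k))"

lemma sum_split: "(\<Sum>l<K * s. f l) = (\<Sum>r<K. \<Sum>m<s. (f (r * s + m) :: 'a::comm_monoid_add))" for K s :: nat
proof -
  have "(\<Sum>l<K * s. f l) = (\<Sum>r<K. sum f {r * s..<r * s + s})" using sum.nat_group[of f s K] by simp
  also have "\<dots> = (\<Sum>r<K. \<Sum>m<s. f (r * s + m))"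
  proof (rule sum.cong[OF refl])
    fix r
    have "sum f {r * s..<r * s + s} = sum f {0 + r * s..<s + r * s}" by (simp add: add.commute)
    also have "\<dots> = (\<Sum>m\<in>{0..<s}. f (m + r * s))" by (rule sum.shift_bounds_nat_ivl)
    finally show "sum f {r * s..<r * s + s} = (\<Sum>m<s. f (r * s + m))" by (simp add: atLeast0LessThan add.commute)
  qed
  finally show ?thesis .
qed

context fixes n :: nat assumes n: "0 < n" begin

lemma om_n: "omega n ^ n = 1"
  using n by (simp add: omega_def DeMoivre complex_eq_iff)

lemma om_mod: "omega n ^ a = omega n ^ (a mod n)"
proof -
  have "omega n ^ a = omega n ^ (n * (a div n) + a mod n)" by simp
  also have "\<dots> = omega n ^ (a mod n)" by (simp only: power_add power_mult om_n) simp
  finally show ?thesis .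
qed

lemma om_cong: "a mod n = b mod n \<Longrightarrow> omega n ^ a = omega n ^ b"
  by (metis om_mod)

lemma om_norm: "cmod (omega n) = 1" by (simp add: omega_def)
lemma om_nz: "omega n \<noteq> 0" by (simp add: omega_def)
lemma om_cnj: "cnj (omega n) = inverse (omega n)"
  by (simp add: omega_def cis_cnj cis_inverse)

lemma om_inv_pow: "t \<le> n \<Longrightarrow> inverse (omega n) ^ (t * k) = omega n ^ ((n - t) * k)"
proof -
  assume t: "t \<le> n"
  have "omega n ^ ((n - t) * k) * omega n ^ (t * k) = omega n ^ (n * k)"
    by (simp add: power_add[symmetric] t add_mult_distrib[symmetric])
  also have "\<dots> = 1" by (simp add: power_mult om_n)
  finally have "omega n ^ ((n - t) * k) = inverse (omega n ^ (t * k))"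
    using om_nz by (simp add: field_simps)
  then show ?thesis by (simp add: power_inverse)
qed

lemma om_neq1: "m mod n \<noteq> 0 \<Longrightarrow> omega n ^ m \<noteq> 1"
proof
  assume m: "m mod n \<noteq> 0" and eq: "omega n ^ m = 1"
  let ?r = "m mod n"
  have "omega n ^ ?r = 1" using eq om_mod[of m] by simp
  hence "cis (real ?r * (- 2 * pi / real n)) = 1" by (simp only: omega_def DeMoivre)
  hence "Re (cis (real ?r * (- 2 * pi / real n))) = Re 1" by (rule arg_cong)
  hence "cos (real ?r * (- 2 * pi / real n)) = 1" by (simp only: cis.sel one_complex.sel)
  then obtain N :: int where N: "real ?r * (- 2 * pi / real n) = real_of_int N * 2 * pi"
    using cos_one_2pi_int by blast
  hence "real ?r = - N * real n"
  proof -
    assume N: "real ?r * (- 2 * pi / real n) = real_of_int N * 2 * pi"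
    have "real ?r * (- 2 * pi / real n) = (- real ?r / real n) * (2 * pi)" by simp
    with N have "(- real ?r / real n) * (2 * pi) = real_of_int N * (2 * pi)" by simp
    then have "- real ?r / real n = real_of_int N" using pi_gt_zero by (simp only: mult_right_cancel)
    then have "real ?r / real n = - real_of_int N" by linarith
    then have "real ?r = - real_of_int N * real n" using n by (simp add: divide_eq_eq)
    then show ?thesis by simp
  qed
  moreover have "0 < ?r" "?r < n" using m n by auto
  ultimately show False
  proof -
    assume "real ?r = - N * real n"
    have "real_of_int (int ?r) = real_of_int (- N * int n)"
      using \<open>real ?r = - N * real n\<close> by simp
    then have I: "int ?r = - N * int n" by (simp only: of_int_eq_iff)
    show False
    proof (cases "N \<ge> 0")
      case True
      then have "- N * int n \<le> 0" by (simp add: mult_nonneg_nonneg)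
      then show False using I \<open>0 < ?r\<close> by linarith
    next
      case False
      then have "- N \<ge> 1" by simp
      then have "- N * int n \<ge> int n" using mult_right_mono[of 1 "- N" "int n"] by simp
      then show False using I \<open>?r < n\<close> by linarith
    qed
  qed
qed

lemma orth: "(\<Sum>k<n. omega n ^ (k * m)) = (if m mod n = 0 then of_nat n else 0)"
proof (cases "m mod n = 0")
  case True
  have "omega n ^ (k * m) = 1" for k
  proof -
    have "n dvd k * m" using True by auto
    then have "(k*m) mod n = 0 mod n" by simp
    then show ?thesis using om_cong[of "k*m" 0] by simp
  qed
  then show ?thesis using True by simp
next
  case False
  have "(\<Sum>k<n. omega n ^ (k * m)) = (\<Sum>k<n. (omega n ^ m) ^ k)"
    by (rule sum.cong[OF refl]) (simp add: power_mult[symmetric] mult.commute)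
  also have "\<dots> = 0"
  proof -
    have "(omega n ^ m) ^ n = omega n ^ (n * m)" by (simp add: power_mult[symmetric] mult.commute)
    also have "\<dots> = 1" by (simp add: power_mult om_n)
    finally show ?thesis using om_neq1[OF False] by (simp add: sum_gp_strict)
  qed
  finally show ?thesis using False by simp
qed

lemma negneg: "k < n \<Longrightarrow> (n - (n - k) mod n) mod n = k"
  by (cases "k = 0") auto

lemma reidx: "(\<Sum>k<n. f ((n - k) mod n)) = (\<Sum>k<n. (f k :: 'a::comm_monoid_add))"
  by (rule sum.reindex_bij_witness[where i="\<lambda>k. (n - k) mod n" and j="\<lambda>k. (n - k) mod n"])
    (use n negneg in auto)

lemma om_negk: "k \<le> n \<Longrightarrow> omega n ^ (((n - k) mod n) * t) = cnj (omega n ^ (k * t))"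
proof -
  assume k: "k \<le> n"
  have "cnj (omega n ^ (k * t)) = inverse (omega n) ^ (k * t)" by (simp add: om_cnj)
  also have "\<dots> = omega n ^ ((n - k) * t)" using om_inv_pow[OF k] .
  also have "\<dots> = omega n ^ (((n - k) mod n) * t)" by (rule om_cong) (simp add: mod_mult_left_eq)
  finally show ?thesis by simp
qed


lemma om_negk': "k \<le> n \<Longrightarrow> omega n ^ (t * ((n - k) mod n)) = inverse (omega n) ^ (k * t)"
  using om_negk[of k t] by (metis mult.commute om_cnj complex_cnj_power)

lemma fft_csym: "csym n (tfft n A)"
  unfolding csym_def
proof (intro allI impI)
  fix i j k assume k: "k < n"
  have "tfft n A i j ((n - k) mod n) = (\<Sum>t<n. complex_of_real (A i j t) * cnj (omega n ^ (k * t)))"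
    unfolding tfft_def using om_negk[of k] k by simp
  also have "\<dots> = cnj (tfft n A i j k)" by (simp add: tfft_def)
  finally show "tfft n A i j ((n - k) mod n) = cnj (tfft n A i j k)" .
qed


lemma ifft_fft: "t < n \<Longrightarrow> tifft n (tfft n A) i j t = A i j t"
proof -
  assume t: "t < n"
  have "(\<Sum>k<n. tfft n A i j k * inverse (omega n) ^ (t * k))
      = (\<Sum>k<n. \<Sum>t'<n. complex_of_real (A i j t') * omega n ^ (k * (t' + (n - t))))"
  proof (rule sum.cong[OF refl])
    fix k assume "k \<in> {..<n}"
    have eq: "inverse (omega n) ^ (t * k) = omega n ^ ((n - t) * k)" using om_inv_pow t by simp
    have eq2: "omega n ^ (k * (t' + (n - t))) = omega n ^ (k * t') * omega n ^ ((n - t) * k)" for t'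
      by (simp add: power_add add_mult_distrib2 mult.commute)
    show "tfft n A i j k * inverse (omega n) ^ (t * k)
      = (\<Sum>t'<n. complex_of_real (A i j t') * omega n ^ (k * (t' + (n - t))))"
      unfolding tfft_def sum_distrib_right eq eq2 by (simp add: mult.commute mult.left_commute)
  qed
  also have "\<dots> = (\<Sum>t'<n. complex_of_real (A i j t') * (\<Sum>k<n. omega n ^ (k * (t' + (n - t)))))"
    by (subst sum.swap) (simp add: sum_distrib_left)
  also have "\<dots> = (\<Sum>t'<n. complex_of_real (A i j t') * (if t' = t then of_nat n else 0))"
  proof (rule sum.cong[OF refl])
    fix t' assume "t' \<in> {..<n}"
    then have t': "t' < n" by simp
    have "((t' + (n - t)) mod n = 0) = (t' = t)"
    proof
      assume h: "(t' + (n - t)) mod n = 0"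
      show "t' = t"
      proof (cases "t' < t")
        case True
        then have "t' + (n - t) < n" "0 < t' + (n - t)" using t by auto
        then show ?thesis using h by simp
      next
        case False
        then have "t' + (n - t) = n + (t' - t)" using t by simp
        then have "(t' - t) mod n = 0" using h by simp
        then show ?thesis using False t' by (simp add: mod_less)
      qed
    qed (use t in simp)
    then show "complex_of_real (A i j t') * (\<Sum>k<n. omega n ^ (k * (t' + (n - t))))
        = complex_of_real (A i j t') * (if t' = t then of_nat n else 0)"
      by (simp add: orth)
  qed
  also have "\<dots> = of_nat n * complex_of_real (A i j t)" using t by (simp add: if_distrib sum.delta cong: if_cong)
  finally show ?thesis using n unfolding tifft_def by simp
qed

lemma real_if_cnj: "cnj z = z \<Longrightarrow> complex_of_real (Re z) = z"
  by (simp add: complex_eq_iff)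

lemma fft_ifft: "csym n X \<Longrightarrow> k < n \<Longrightarrow> tfft n (tifft n X) i j k = X i j k"
proof -
  assume cs: "csym n X" and k: "k < n"
  define z where "z t = (1 / of_nat n) * (\<Sum>k'<n. X i j k' * inverse (omega n) ^ (t * k'))" for t
  have zr: "cnj (z t) = z t" for t
  proof -
    have "cnj (z t) = (1 / of_nat n) * (\<Sum>k'<n. X i j ((n - k') mod n) * omega n ^ (t * k'))"
      unfolding z_def using cs unfolding csym_def
      by (simp add: om_cnj)
    also have "(\<Sum>k'<n. X i j ((n - k') mod n) * omega n ^ (t * k'))
        = (\<Sum>k'<n. (\<lambda>k''. X i j k'' * omega n ^ (((n - k'') mod n) * t)) ((n - k') mod n))"
      by (rule sum.cong[OF refl]) (simp add: negneg mult.commute)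
    also have "\<dots> = (\<Sum>k''<n. X i j k'' * omega n ^ (((n - k'') mod n) * t))" by (rule reidx)
    also have "\<dots> = (\<Sum>k''<n. X i j k'' * inverse (omega n) ^ (t * k''))"
    proof (rule sum.cong[OF refl])
      fix x assume "x \<in> {..<n}"
      then have "omega n ^ (t * ((n - x) mod n)) = inverse (omega n) ^ (x * t)" by (simp add: om_negk')
      then show "X i j x * omega n ^ ((n - x) mod n * t) = X i j x * inverse (omega n) ^ (t * x)"
        by (simp add: mult.commute)
    qed
    finally show ?thesis unfolding z_def by simp
  qed
  have "tfft n (tifft n X) i j k = (\<Sum>t<n. z t * omega n ^ (k * t))"
    unfolding tfft_def tifft_def z_def[symmetric] using real_if_cnj[OF zr] by simp
  also have "\<dots> = (1 / of_nat n) * (\<Sum>t<n. \<Sum>k'<n. X i j k' * omega n ^ (t * (k + (n - k'))))"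
    unfolding z_def sum_distrib_left
  proof (rule sum.cong[OF refl])
    fix t assume "t \<in> {..<n}"
    have e: "X i j k' * inverse (omega n) ^ (t * k') * omega n ^ (k * t) = X i j k' * omega n ^ (t * (k + (n - k')))"
      if "k' \<in> {..<n}" for k'
    proof -
      have "inverse (omega n) ^ (t * k') = inverse (omega n) ^ (k' * t)" by (simp add: mult.commute)
      also have "\<dots> = omega n ^ ((n - k') * t)" using om_inv_pow that by simp
      finally have "inverse (omega n) ^ (t * k') * omega n ^ (k * t) = omega n ^ ((n - k') * t + k * t)"
        by (simp add: power_add)
      also have "(n - k') * t + k * t = t * (k + (n - k'))" by (simp add: algebra_simps)
      finally show ?thesis by (simp add: mult.assoc)
    qed
    show "(\<Sum>k'<n. 1 / of_nat n * (X i j k' * inverse (omega n) ^ (t * k'))) * omega n ^ (k * t) =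
         (\<Sum>k'<n. 1 / of_nat n * (X i j k' * omega n ^ (t * (k + (n - k')))))"
      unfolding sum_distrib_right
      by (intro sum.cong refl) (metis (no_types, lifting) e mult.assoc)
  qed
  also have "\<dots> = (1 / of_nat n) * (\<Sum>k'<n. X i j k' * (\<Sum>t<n. omega n ^ (t * (k + (n - k')))))"
    by (subst sum.swap) (simp add: sum_distrib_left)
  also have "\<dots> = (1 / of_nat n) * (\<Sum>k'<n. X i j k' * (if k' = k then of_nat n else 0))"
  proof -
    have "\<And>k'. k' < n \<Longrightarrow> ((k + (n - k')) mod n = 0) = (k' = k)"
    proof
      fix k' assume k': "k' < n" and h: "(k + (n - k')) mod n = 0"
      show "k' = k"
      proof (cases "k < k'")
        case True
        then have "k + (n - k') < n" "0 < k + (n - k')" using k' by auto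
        then show ?thesis using h by simp
      next
        case False
        then have "k + (n - k') = n + (k - k')" using k' by simp
        then have "(k - k') mod n = 0" using h by simp
        then show ?thesis using False k by (simp add: mod_less)
      qed
    qed (use k in simp)
    then show ?thesis by (intro arg_cong[where f="\<lambda>x. _ * x"] sum.cong refl) (simp add: orth)
  qed
  also have "\<dots> = X i j k" using k n by (simp add: if_distrib sum.delta cong: if_cong)
  finally show ?thesis .
qed


lemma fft_sym: "k < n \<Longrightarrow> tfft n A i j ((n - k) mod n) = cnj (tfft n A i j k)"
  using fft_csym unfolding csym_def by blast

lemma teq_fft:
  assumes "\<And>i j k. i < m \<Longrightarrow> j < q \<Longrightarrow> k < n \<Longrightarrow> tfft n X i j k = tfft n Y i j k"
  shows "teq m q n X Y"
  unfolding teq_def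
proof (intro allI impI)
  fix i j t assume i: "i < m" and j: "j < q" and t: "t < n"
  have "X i j t = tifft n (tfft n X) i j t" using ifft_fft[OF t] by simp
  also have "\<dots> = tifft n (tfft n Y) i j t"
  proof -
    have "(\<Sum>k<n. tfft n X i j k * inverse (omega n) ^ (t * k)) = (\<Sum>k<n. tfft n Y i j k * inverse (omega n) ^ (t * k))"
      by (rule sum.cong) (auto simp: assms i j)
    then show ?thesis unfolding tifft_def by simp
  qed
  also have "\<dots> = Y i j t" using ifft_fft[OF t] by simp
  finally show "X i j t = Y i j t" .
qed

lemma fft_tprod: "k < n \<Longrightarrow> tfft n (tprod m n A B) i j k = (\<Sum>l<m. tfft n A i l k * tfft n B l j k)"
  unfolding tprod_def
  by (rule fft_ifft) (auto simp: csym_def fft_sym)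

lemma fft_tkron: "k < n \<Longrightarrow> tfft n (tkron p q n A B) i j k =
   tfft n A (i div p) (j div q) k * tfft n B (i mod p) (j mod q) k"
  unfolding tkron_def
  by (rule fft_ifft) (auto simp: csym_def fft_sym)

lemma fft_tid: "tfft n tid i j k = (if i = j then 1 else 0)"
proof -
  have "tfft n tid i j k = (\<Sum>t<n. if t = 0 then (if i = j then 1 else 0) else 0)"
    unfolding tfft_def tid_def by (rule sum.cong) auto
  then show ?thesis using n by (simp add: sum.delta)
qed

lemma fft_etube: "tfft n etube i j k = 1"
proof -
  have "tfft n etube i j k = (\<Sum>t<n. if t = 0 then 1 else 0)"
    unfolding tfft_def etube_def by (rule sum.cong) auto
  then show ?thesis using n by (simp add: sum.delta)
qed

lemma fft_otube: "tfft n otube i j k = 0"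
  unfolding tfft_def otube_def by simp

lemma fft_zero: "tfft n (\<lambda>i j t. 0) i j k = 0"
  unfolding tfft_def by simp

lemma fft_tadd: "tfft n (tadd X Y) i j k = tfft n X i j k + tfft n Y i j k"
  unfolding tfft_def tadd_def by (simp add: distrib_right sum.distrib)

lemma fft_tsub: "tfft n (tsub X Y) i j k = tfft n X i j k - tfft n Y i j k"
  unfolding tfft_def tsub_def by (simp add: left_diff_distrib sum_subtractf)

lemma fft_ttrans: "tfft n (ttrans n A) i j k = cnj (tfft n A j i k)"
proof -
  have "tfft n (ttrans n A) i j k = (\<Sum>t<n. (\<lambda>t'. complex_of_real (A j i t') * omega n ^ (k * ((n - t') mod n))) ((n - t) mod n))"
    unfolding tfft_def ttrans_def by (rule sum.cong[OF refl]) (simp add: negneg)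
  also have "\<dots> = (\<Sum>t'<n. complex_of_real (A j i t') * omega n ^ (k * ((n - t') mod n)))" by (rule reidx)
  also have "\<dots> = (\<Sum>t'<n. complex_of_real (A j i t') * cnj (omega n ^ (k * t')))"
  proof (rule sum.cong[OF refl])
    fix t' assume "t' \<in> {..<n}"
    then have "omega n ^ (k * ((n - t') mod n)) = inverse (omega n) ^ (t' * k)" by (simp add: om_negk')
    then show "complex_of_real (A j i t') * omega n ^ (k * ((n - t') mod n)) = complex_of_real (A j i t') * cnj (omega n ^ (k * t'))"
      by (simp add: om_cnj mult.commute)
  qed
  also have "\<dots> = cnj (tfft n A j i k)" by (simp add: tfft_def)
  finally show ?thesis .
qed

lemma fft_tubemul: "k < n \<Longrightarrow> tfft n (tubemul n a W) i j k = tfft n a 0 0 k * tfft n W i j k"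
proof -
  assume k: "k < n"
  have "tfft n (tubemul n a W) i j k = tfft n (tprod 1 n a (\<lambda>_ _ t'. W i j t')) 0 0 k"
    unfolding tubemul_def tfft_def by simp
  also have "\<dots> = tfft n a 0 0 k * tfft n W i j k" using fft_tprod[OF k] by (simp add: tfft_def)
  finally show ?thesis .
qed

lemma fnorm_sym: "k < n \<Longrightarrow> fnorm m q (tfft n W) ((n - k) mod n) = fnorm m q (tfft n W) k"
  unfolding fnorm_def by (simp add: fft_sym)

lemma fft_normQ: "k < n \<Longrightarrow> tfft n (fst (tnormalize m q n W)) i j k
   = tfft n W i j k / complex_of_real (fnorm m q (tfft n W) k)"
  unfolding tnormalize_def fst_conv
  by (rule fft_ifft) (auto simp: csym_def fft_sym fnorm_sym)

lemma fft_norma: "k < n \<Longrightarrow> tfft n (snd (tnormalize m q n W)) i j k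
   = complex_of_real (fnorm m q (tfft n W) k)"
  unfolding tnormalize_def snd_conv
  by (rule fft_ifft) (auto simp: csym_def fnorm_sym)

lemma norm_recon: "nobreak m q n W \<Longrightarrow> k < n \<Longrightarrow>
  tfft n W i j k = tfft n (fst (tnormalize m q n W)) i j k * tfft n (snd (tnormalize m q n W)) 0 0 k"
  by (simp add: fft_normQ fft_norma nobreak_def)


lemma block:
  assumes s: "0 < s" and k: "k < n"
  shows "tfft n (tprod (K * s) n X (tkron s s n C tid)) i c k
    = (\<Sum>r<K. tfft n X i (r * s + c mod s) k * tfft n C r (c div s) k)"
proof -
  have "tfft n (tprod (K * s) n X (tkron s s n C tid)) i c k
     = (\<Sum>l<K * s. tfft n X i l k * (tfft n C (l div s) (c div s) k * (if l mod s = c mod s then 1 else 0)))"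
    using k by (simp add: fft_tprod fft_tkron fft_tid)
  also have "\<dots> = (\<Sum>r<K. \<Sum>m<s. tfft n X i (r * s + m) k * (tfft n C ((r * s + m) div s) (c div s) k * (if (r * s + m) mod s = c mod s then 1 else 0)))"
    by (rule sum_split)
  also have "\<dots> = (\<Sum>r<K. \<Sum>m<s. if m = c mod s then tfft n X i (r * s + m) k * tfft n C r (c div s) k else 0)"
    using s by (intro sum.cong refl) auto
  also have "\<dots> = (\<Sum>r<K. tfft n X i (r * s + c mod s) k * tfft n C r (c div s) k)"
    using s by (simp add: sum.delta)
  finally show ?thesis .
qed

end


lemma gk_Suc:
  "gkV n1 n2 n3 s A B (Suc j) = fst (tnormalize n2 s n3 (gkVt n1 n2 n3 s A B (Suc j)))"
  "gkb n1 n2 n3 s A B (Suc j) = snd (tnormalize n2 s n3 (gkVt n1 n2 n3 s A B (Suc j)))"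
  "gkU n1 n2 n3 s A B (Suc (Suc j)) = fst (tnormalize n1 s n3 (gkUt n1 n2 n3 s A B (Suc j)))"
  "gka n1 n2 n3 s A B (Suc (Suc j)) = snd (tnormalize n1 s n3 (gkUt n1 n2 n3 s A B (Suc j)))"
  by (simp_all add: gkV_def gkVt_def gkU_def gka_def gkb_def gkUt_def Let_def split: prod.split)

lemma gk_1:
  "gkU n1 n2 n3 s A B 1 = fst (tnormalize n1 s n3 B)"
  "gka n1 n2 n3 s A B 1 = snd (tnormalize n1 s n3 B)"
  "gkV n1 n2 n3 s A B 0 = (\<lambda>i j t. 0)"
  by (simp_all add: gkV_def gkU_def gka_def)


lemma F0:
  assumes "0 < n3" "w < n3" "nobreak n1 s n3 B"
  shows "tfft n3 B i c w = tfft n3 (gkU n1 n2 n3 s A B 1) i c w * tfft n3 (gka n1 n2 n3 s A B 1) 0 0 w"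
  unfolding gk_1 using norm_recon[OF assms(1) assms(3) assms(2)] by simp

lemma F1:
  assumes n: "0 < n3" and w: "w < n3" and nb: "nobreak n1 s n3 (gkUt n1 n2 n3 s A B j)" and j: "1 \<le> j"
  shows "tfft n3 (tprod n2 n3 A (gkV n1 n2 n3 s A B j)) i c w
    = tfft n3 (gkU n1 n2 n3 s A B (j + 1)) i c w * tfft n3 (gka n1 n2 n3 s A B (j + 1)) 0 0 w
      + tfft n3 (gkb n1 n2 n3 s A B j) 0 0 w * tfft n3 (gkU n1 n2 n3 s A B j) i c w"
proof -
  obtain j' where j': "j = Suc j'" using j by (cases j) auto
  have "tfft n3 (gkUt n1 n2 n3 s A B j) i c w
    = tfft n3 (gkU n1 n2 n3 s A B (j + 1)) i c w * tfft n3 (gka n1 n2 n3 s A B (j + 1)) 0 0 w"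
    using norm_recon[OF n nb w] by (simp add: j' gk_Suc)
  moreover have "tfft n3 (gkUt n1 n2 n3 s A B j) i c w
    = tfft n3 (tprod n2 n3 A (gkV n1 n2 n3 s A B j)) i c w
      - tfft n3 (gkb n1 n2 n3 s A B j) 0 0 w * tfft n3 (gkU n1 n2 n3 s A B j) i c w"
    unfolding gkUt_def by (simp add: fft_tsub[OF n] fft_tubemul[OF n w])
  ultimately show ?thesis by (simp add: algebra_simps)
qed

lemma F2:
  assumes n: "0 < n3" and w: "w < n3" and nb: "nobreak n2 s n3 (gkVt n1 n2 n3 s A B j)" and j: "1 \<le> j"
  shows "tfft n3 (tprod n1 n3 (ttrans n3 A) (gkU n1 n2 n3 s A B j)) i c w
    = tfft n3 (gkV n1 n2 n3 s A B j) i c w * tfft n3 (gkb n1 n2 n3 s A B j) 0 0 w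
      + tfft n3 (gka n1 n2 n3 s A B j) 0 0 w * tfft n3 (gkV n1 n2 n3 s A B (j - 1)) i c w"
proof -
  obtain j' where j': "j = Suc j'" using j by (cases j) auto
  have "tfft n3 (gkVt n1 n2 n3 s A B j) i c w
    = tfft n3 (gkV n1 n2 n3 s A B j) i c w * tfft n3 (gkb n1 n2 n3 s A B j) 0 0 w"
    using norm_recon[OF n nb w] by (simp add: j' gk_Suc)
  moreover have "tfft n3 (gkVt n1 n2 n3 s A B j) i c w
    = tfft n3 (tprod n1 n3 (ttrans n3 A) (gkU n1 n2 n3 s A B j)) i c w
      - tfft n3 (gka n1 n2 n3 s A B j) 0 0 w * tfft n3 (gkV n1 n2 n3 s A B (j - 1)) i c w"
    unfolding gkVt_def by (simp add: fft_tsub[OF n] fft_tubemul[OF n w])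
  ultimately show ?thesis by (simp add: algebra_simps)
qed


lemma sum_two:
  assumes "finite S" "a \<noteq> b"
  shows "(\<Sum>r\<in>S. g r * (if r = a then x else if r = b then y else 0))
    = (if a \<in> S then g a * x else 0) + (if b \<in> S then g b * y else (0::complex))"
proof -
  have "(\<Sum>r\<in>S. g r * (if r = a then x else if r = b then y else 0))
     = (\<Sum>r\<in>S. (if r = a then g a * x else 0) + (if r = b then g b * y else 0))"
    using assms(2) by (intro sum.cong) auto
  also have "\<dots> = (if a \<in> S then g a * x else 0) + (if b \<in> S then g b * y else 0)"
    using assms(1) by (simp add: sum.distrib sum.delta)
  finally show ?thesis .
qed

lemma fft_bbU: "tfft n (bbU n1 n2 n3 s A B K) i c w = tfft n (gkU n1 n2 n3 s A B (c div s + 1)) i (c mod s) w"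
  by (simp add: tfft_def bbU_def)

lemma fft_bbV: "tfft n (bbV n1 n2 n3 s A B K) i c w = tfft n (gkV n1 n2 n3 s A B (c div s + 1)) i (c mod s) w"
  by (simp add: tfft_def bbV_def)

lemma fft_Ct: "tfft n (gkCt n1 n2 n3 s A B K) r c w =
  (if r = c then tfft n (gkb n1 n2 n3 s A B (c + 1)) 0 0 w
   else if r = c + 1 then tfft n (gka n1 n2 n3 s A B (c + 2)) 0 0 w else 0)"
  by (simp add: tfft_def gkCt_def otube_def)

lemma fft_C: "tfft n (gkC n1 n2 n3 s A B K) r c w =
  (if r < K then tfft n (gkCt n1 n2 n3 s A B K) r c w else 0)"
  by (simp add: tfft_def gkC_def)

lemma fft_E1: "0 < n \<Longrightarrow> tfft n E1 r c w = (if r = 0 then 1 else 0)"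
proof (cases "r = 0")
  case True
  assume n: "0 < n"
  have "tfft n E1 r c w = tfft n etube 0 0 w" unfolding tfft_def E1_def using True by simp
  then show ?thesis using fft_etube[OF n] True by simp
next
  case False
  then show ?thesis by (simp add: tfft_def E1_def otube_def)
qed

lemma fft_Ek: "0 < n \<Longrightarrow> tfft n (Ek K) r c w = (if c = K - 1 then 1 else 0)"
proof (cases "c = K - 1")
  case True
  assume n: "0 < n"
  have "tfft n (Ek K) r c w = tfft n etube 0 0 w" unfolding tfft_def Ek_def using True by simp
  then show ?thesis using fft_etube[OF n] True by simp
next
  case False
  then show ?thesis by (simp add: tfft_def Ek_def otube_def)
qed

lemma real_b: "0 < n3 \<Longrightarrow> w < n3 \<Longrightarrow> 1 \<le> j \<Longrightarrow>
  cnj (tfft n3 (gkb n1 n2 n3 s A B j) 0 0 w) = tfft n3 (gkb n1 n2 n3 s A B j) 0 0 w"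
  by (cases j) (simp_all add: gk_Suc fft_norma)

lemma real_a: "0 < n3 \<Longrightarrow> w < n3 \<Longrightarrow> 1 \<le> j \<Longrightarrow>
  cnj (tfft n3 (gka n1 n2 n3 s A B j) 0 0 w) = tfft n3 (gka n1 n2 n3 s A B j) 0 0 w"
proof -
  assume "0 < n3" "w < n3" "1 \<le> j"
  then consider "j = 1" | j' where "j = Suc (Suc j')" by (metis One_nat_def Suc_le_D le_SucE not0_implies_Suc le_zero_eq)
  then show ?thesis using \<open>0 < n3\<close> \<open>w < n3\<close>
    by cases (simp_all add: gk_Suc gk_1[unfolded One_nat_def] fft_norma)
qed

lemma divmod_aux: "m < (s::nat) \<Longrightarrow> (r * s + m) div s = r \<and> (r * s + m) mod s = m"
  by simp


lemma R1:
  assumes n: "0 < n3" and w: "w < n3" and c: "c < k * s"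
  shows "tfft n3 (tprod ((k + 1) * s) n3 (bbU n1 n2 n3 s A B (k + 1)) (tkron s s n3 (gkCt n1 n2 n3 s A B k) tid)) i c w
    = tfft n3 (gkU n1 n2 n3 s A B (c div s + 1)) i (c mod s) w * tfft n3 (gkb n1 n2 n3 s A B (c div s + 1)) 0 0 w
    + tfft n3 (gkU n1 n2 n3 s A B (c div s + 2)) i (c mod s) w * tfft n3 (gka n1 n2 n3 s A B (c div s + 2)) 0 0 w"
proof -
  have s: "0 < s" using c by (cases s) auto
  have d: "c div s < k" using c by (simp add: less_mult_imp_div_less)
  have m: "c mod s < s" using s by simp
  have "tfft n3 (tprod ((k + 1) * s) n3 (bbU n1 n2 n3 s A B (k + 1)) (tkron s s n3 (gkCt n1 n2 n3 s A B k) tid)) i c w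
    = (\<Sum>r<k + 1. tfft n3 (bbU n1 n2 n3 s A B (k + 1)) i (r * s + c mod s) w * tfft n3 (gkCt n1 n2 n3 s A B k) r (c div s) w)"
    by (rule block[OF n s w])
  also have "\<dots> = (\<Sum>r<k + 1. tfft n3 (gkU n1 n2 n3 s A B (r + 1)) i (c mod s) w *
      (if r = c div s then tfft n3 (gkb n1 n2 n3 s A B (c div s + 1)) 0 0 w
       else if r = c div s + 1 then tfft n3 (gka n1 n2 n3 s A B (c div s + 2)) 0 0 w else 0))"
    by (intro sum.cong refl) (simp only: fft_bbU fft_Ct divmod_aux[OF m])
  also have "\<dots> = tfft n3 (gkU n1 n2 n3 s A B (c div s + 1)) i (c mod s) w * tfft n3 (gkb n1 n2 n3 s A B (c div s + 1)) 0 0 w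
    + tfft n3 (gkU n1 n2 n3 s A B (c div s + 2)) i (c mod s) w * tfft n3 (gka n1 n2 n3 s A B (c div s + 2)) 0 0 w"
    by (subst sum_two) (use d in auto)
  finally show ?thesis by simp
qed


lemma R2a:
  assumes n: "0 < n3" and w: "w < n3" and c: "c < k * s"
  shows "tfft n3 (tprod (k * s) n3 (bbU n1 n2 n3 s A B k) (tkron s s n3 (gkC n1 n2 n3 s A B k) tid)) i c w
    = tfft n3 (gkU n1 n2 n3 s A B (c div s + 1)) i (c mod s) w * tfft n3 (gkb n1 n2 n3 s A B (c div s + 1)) 0 0 w
    + (if c div s + 1 < k then tfft n3 (gkU n1 n2 n3 s A B (c div s + 2)) i (c mod s) w * tfft n3 (gka n1 n2 n3 s A B (c div s + 2)) 0 0 w else 0)"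
proof -
  have s: "0 < s" using c by (cases s) auto
  have d: "c div s < k" using c by (simp add: less_mult_imp_div_less)
  have m: "c mod s < s" using s by simp
  have "tfft n3 (tprod (k * s) n3 (bbU n1 n2 n3 s A B k) (tkron s s n3 (gkC n1 n2 n3 s A B k) tid)) i c w
    = (\<Sum>r<k. tfft n3 (bbU n1 n2 n3 s A B k) i (r * s + c mod s) w * tfft n3 (gkC n1 n2 n3 s A B k) r (c div s) w)"
    by (rule block[OF n s w])
  also have "\<dots> = (\<Sum>r<k. tfft n3 (gkU n1 n2 n3 s A B (r + 1)) i (c mod s) w *
      (if r = c div s then tfft n3 (gkb n1 n2 n3 s A B (c div s + 1)) 0 0 w
       else if r = c div s + 1 then tfft n3 (gka n1 n2 n3 s A B (c div s + 2)) 0 0 w else 0))"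
    by (intro sum.cong refl) (simp only: fft_bbU fft_C fft_Ct divmod_aux[OF m] lessThan_iff if_True)
  also have "\<dots> = tfft n3 (gkU n1 n2 n3 s A B (c div s + 1)) i (c mod s) w * tfft n3 (gkb n1 n2 n3 s A B (c div s + 1)) 0 0 w
    + (if c div s + 1 < k then tfft n3 (gkU n1 n2 n3 s A B (c div s + 2)) i (c mod s) w * tfft n3 (gka n1 n2 n3 s A B (c div s + 2)) 0 0 w else 0)"
    by (subst sum_two) (use d in auto)
  finally show ?thesis using d by simp
qed

lemma R2b:
  assumes n: "0 < n3" and w: "w < n3" and c: "c < k * s"
  shows "tfft n3 (tprod s n3 (gkU n1 n2 n3 s A B (k + 1)) (tkron s s n3 (tprod 1 n3 (gka n1 n2 n3 s A B (k + 1)) (Ek k)) tid)) i c w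
    = (if c div s = k - 1 then tfft n3 (gkU n1 n2 n3 s A B (k + 1)) i (c mod s) w * tfft n3 (gka n1 n2 n3 s A B (k + 1)) 0 0 w else 0)"
proof -
  have s: "0 < s" using c by (cases s) auto
  have "tfft n3 (tprod (1 * s) n3 (gkU n1 n2 n3 s A B (k + 1)) (tkron s s n3 (tprod 1 n3 (gka n1 n2 n3 s A B (k + 1)) (Ek k)) tid)) i c w
    = (\<Sum>r<1. tfft n3 (gkU n1 n2 n3 s A B (k + 1)) i (r * s + c mod s) w * tfft n3 (tprod 1 n3 (gka n1 n2 n3 s A B (k + 1)) (Ek k)) r (c div s) w)"
    by (rule block[OF n s w])
  then show ?thesis using n w by (simp add: fft_tprod fft_Ek)
qed

lemma R3:
  assumes n: "0 < n3" and w: "w < n3" and c: "c < k * s"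
  shows "tfft n3 (tprod (k * s) n3 (bbV n1 n2 n3 s A B k) (tkron s s n3 (ttrans n3 (gkC n1 n2 n3 s A B k)) tid)) i c w
    = tfft n3 (gkV n1 n2 n3 s A B (c div s + 1)) i (c mod s) w * tfft n3 (gkb n1 n2 n3 s A B (c div s + 1)) 0 0 w
    + tfft n3 (gka n1 n2 n3 s A B (c div s + 1)) 0 0 w * tfft n3 (gkV n1 n2 n3 s A B (c div s)) i (c mod s) w"
proof -
  have s: "0 < s" using c by (cases s) auto
  have d: "c div s < k" using c by (simp add: less_mult_imp_div_less)
  have m: "c mod s < s" using s by simp
  have "tfft n3 (tprod (k * s) n3 (bbV n1 n2 n3 s A B k) (tkron s s n3 (ttrans n3 (gkC n1 n2 n3 s A B k)) tid)) i c w
    = (\<Sum>r<k. tfft n3 (bbV n1 n2 n3 s A B k) i (r * s + c mod s) w * tfft n3 (ttrans n3 (gkC n1 n2 n3 s A B k)) r (c div s) w)"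
    by (rule block[OF n s w])
  also have "\<dots> = (\<Sum>r<k. tfft n3 (gkV n1 n2 n3 s A B (r + 1)) i (c mod s) w *
      cnj (if c div s = r then tfft n3 (gkb n1 n2 n3 s A B (r + 1)) 0 0 w
       else if c div s = r + 1 then tfft n3 (gka n1 n2 n3 s A B (r + 2)) 0 0 w else 0))"
    by (intro sum.cong refl) (simp only: fft_bbV fft_ttrans[OF n] fft_C fft_Ct divmod_aux[OF m] d if_True)
  also have "\<dots> = tfft n3 (gkV n1 n2 n3 s A B (c div s + 1)) i (c mod s) w * tfft n3 (gkb n1 n2 n3 s A B (c div s + 1)) 0 0 w
    + tfft n3 (gka n1 n2 n3 s A B (c div s + 1)) 0 0 w * tfft n3 (gkV n1 n2 n3 s A B (c div s)) i (c mod s) w"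
  proof (cases "c div s")
    case 0
    have "(\<Sum>r<k. tfft n3 (gkV n1 n2 n3 s A B (r + 1)) i (c mod s) w *
      cnj (if c div s = r then tfft n3 (gkb n1 n2 n3 s A B (r + 1)) 0 0 w
       else if c div s = r + 1 then tfft n3 (gka n1 n2 n3 s A B (r + 2)) 0 0 w else 0))
      = (\<Sum>r<k. if r = 0 then tfft n3 (gkV n1 n2 n3 s A B 1) i (c mod s) w * tfft n3 (gkb n1 n2 n3 s A B 1) 0 0 w else 0)"
      using 0 real_b[OF n w, of 1] by (intro sum.cong refl) auto
    also have "\<dots> = tfft n3 (gkV n1 n2 n3 s A B 1) i (c mod s) w * tfft n3 (gkb n1 n2 n3 s A B 1) 0 0 w"
      using d 0 by (simp add: sum.delta)
    finally show ?thesis using 0 by (simp add: gk_1 fft_zero[OF n])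
  next
    case (Suc d')
    have "(\<Sum>r<k. tfft n3 (gkV n1 n2 n3 s A B (r + 1)) i (c mod s) w *
      cnj (if c div s = r then tfft n3 (gkb n1 n2 n3 s A B (r + 1)) 0 0 w
       else if c div s = r + 1 then tfft n3 (gka n1 n2 n3 s A B (r + 2)) 0 0 w else 0))
      = (\<Sum>r<k. tfft n3 (gkV n1 n2 n3 s A B (r + 1)) i (c mod s) w *
         (if r = c div s then tfft n3 (gkb n1 n2 n3 s A B (c div s + 1)) 0 0 w
          else if r = d' then tfft n3 (gka n1 n2 n3 s A B (c div s + 1)) 0 0 w else 0))"
      using Suc real_b[OF n w] real_a[OF n w] by (intro sum.cong refl) auto
    also have "\<dots> = tfft n3 (gkV n1 n2 n3 s A B (c div s + 1)) i (c mod s) w * tfft n3 (gkb n1 n2 n3 s A B (c div s + 1)) 0 0 w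
       + tfft n3 (gkV n1 n2 n3 s A B (d' + 1)) i (c mod s) w * tfft n3 (gka n1 n2 n3 s A B (c div s + 1)) 0 0 w"
      by (subst sum_two) (use d Suc in auto)
    finally show ?thesis using Suc by (simp add: mult.commute)
  qed
  finally show ?thesis .
qed

theorem proposition13:
  fixes n1 n2 n3 s k :: nat and A B :: tensor
  assumes "n3 > 0"
    and "gk_no_breakdown n1 n2 n3 s A B k"
  shows "teq n1 (k * s) n3
           (tprod n2 n3 A (bbV n1 n2 n3 s A B k))
           (tprod ((k + 1) * s) n3 (bbU n1 n2 n3 s A B (k + 1))
              (tkron s s n3 (gkCt n1 n2 n3 s A B k) tid))
       \<and> teq n1 (k * s) n3
           (tprod ((k + 1) * s) n3 (bbU n1 n2 n3 s A B (k + 1))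
              (tkron s s n3 (gkCt n1 n2 n3 s A B k) tid))
           (tadd (tprod (k * s) n3 (bbU n1 n2 n3 s A B k)
              (tkron s s n3 (gkC n1 n2 n3 s A B k) tid))
            (tprod s n3 (gkU n1 n2 n3 s A B (k + 1))
              (tkron s s n3 (tprod 1 n3 (gka n1 n2 n3 s A B (k + 1)) (Ek k)) tid)))
       \<and> teq n2 (k * s) n3
           (tprod n1 n3 (ttrans n3 A) (bbU n1 n2 n3 s A B k))
           (tprod (k * s) n3 (bbV n1 n2 n3 s A B k)
              (tkron s s n3 (ttrans n3 (gkC n1 n2 n3 s A B k)) tid))
       \<and> teq n1 s n3 B
           (tprod ((k + 1) * s) n3 (bbU n1 n2 n3 s A B (k + 1))
              (tkron s s n3 (tprod 1 n3 E1 (gka n1 n2 n3 s A B 1)) tid))"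
proof -
  note n = assms(1)
  have nbB: "nobreak n1 s n3 B" and nbV: "\<And>j. 1 \<le> j \<Longrightarrow> j \<le> k \<Longrightarrow> nobreak n2 s n3 (gkVt n1 n2 n3 s A B j)"
    and nbU: "\<And>j. 1 \<le> j \<Longrightarrow> j \<le> k \<Longrightarrow> nobreak n1 s n3 (gkUt n1 n2 n3 s A B j)"
    using assms(2) unfolding gk_no_breakdown_def by auto
  have c1: "teq n1 (k * s) n3
           (tprod n2 n3 A (bbV n1 n2 n3 s A B k))
           (tprod ((k + 1) * s) n3 (bbU n1 n2 n3 s A B (k + 1))
              (tkron s s n3 (gkCt n1 n2 n3 s A B k) tid))"
  proof (rule teq_fft[OF n])
    fix i c w assume i: "i < n1" and c: "c < k * s" and w: "w < n3"
    have d: "c div s < k" using c by (simp add: less_mult_imp_div_less)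
    have "tfft n3 (tprod n2 n3 A (bbV n1 n2 n3 s A B k)) i c w
       = tfft n3 (tprod n2 n3 A (gkV n1 n2 n3 s A B (c div s + 1))) i (c mod s) w"
      by (simp add: fft_tprod[OF n w] fft_bbV)
    also have "\<dots> = tfft n3 (gkU n1 n2 n3 s A B (c div s + 1 + 1)) i (c mod s) w * tfft n3 (gka n1 n2 n3 s A B (c div s + 1 + 1)) 0 0 w
      + tfft n3 (gkb n1 n2 n3 s A B (c div s + 1)) 0 0 w * tfft n3 (gkU n1 n2 n3 s A B (c div s + 1)) i (c mod s) w"
      by (rule F1[OF n w nbU]) (use d in auto)
    finally show "tfft n3 (tprod n2 n3 A (bbV n1 n2 n3 s A B k)) i c w = tfft n3 (tprod ((k + 1) * s) n3 (bbU n1 n2 n3 s A B (k + 1))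
              (tkron s s n3 (gkCt n1 n2 n3 s A B k) tid)) i c w"
      using R1[OF n w c] by (simp add: algebra_simps)
  qed
  have c2: "teq n1 (k * s) n3
           (tprod ((k + 1) * s) n3 (bbU n1 n2 n3 s A B (k + 1))
              (tkron s s n3 (gkCt n1 n2 n3 s A B k) tid))
           (tadd (tprod (k * s) n3 (bbU n1 n2 n3 s A B k)
              (tkron s s n3 (gkC n1 n2 n3 s A B k) tid))
            (tprod s n3 (gkU n1 n2 n3 s A B (k + 1))
              (tkron s s n3 (tprod 1 n3 (gka n1 n2 n3 s A B (k + 1)) (Ek k)) tid)))"
  proof (rule teq_fft[OF n])
    fix i c w assume i: "i < n1" and c: "c < k * s" and w: "w < n3"
    have d: "c div s < k" using c by (simp add: less_mult_imp_div_less)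
    show "tfft n3 (tprod ((k + 1) * s) n3 (bbU n1 n2 n3 s A B (k + 1))
              (tkron s s n3 (gkCt n1 n2 n3 s A B k) tid)) i c w = tfft n3 (tadd (tprod (k * s) n3 (bbU n1 n2 n3 s A B k)
              (tkron s s n3 (gkC n1 n2 n3 s A B k) tid))
            (tprod s n3 (gkU n1 n2 n3 s A B (k + 1))
              (tkron s s n3 (tprod 1 n3 (gka n1 n2 n3 s A B (k + 1)) (Ek k)) tid))) i c w"
    proof (cases "c div s + 1 < k")
      case True
      then have "c div s \<noteq> k - 1" by simp
      then show ?thesis using True R1[OF n w c] R2a[OF n w c] R2b[OF n w c] by (simp add: fft_tadd[OF n])
    next
      case False
      then have "c div s = k - 1" "c div s + 2 = k + 1" using d by auto
      then show ?thesis using R1[OF n w c] R2a[OF n w c] R2b[OF n w c] False by (simp add: fft_tadd[OF n])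
    qed
  qed
  have c3: "teq n2 (k * s) n3
           (tprod n1 n3 (ttrans n3 A) (bbU n1 n2 n3 s A B k))
           (tprod (k * s) n3 (bbV n1 n2 n3 s A B k)
              (tkron s s n3 (ttrans n3 (gkC n1 n2 n3 s A B k)) tid))"
  proof (rule teq_fft[OF n])
    fix i c w assume i: "i < n2" and c: "c < k * s" and w: "w < n3"
    have d: "c div s < k" using c by (simp add: less_mult_imp_div_less)
    have "tfft n3 (tprod n1 n3 (ttrans n3 A) (bbU n1 n2 n3 s A B k)) i c w
       = tfft n3 (tprod n1 n3 (ttrans n3 A) (gkU n1 n2 n3 s A B (c div s + 1))) i (c mod s) w"
      by (simp add: fft_tprod[OF n w] fft_bbU)
    also have "\<dots> = tfft n3 (gkV n1 n2 n3 s A B (c div s + 1)) i (c mod s) w * tfft n3 (gkb n1 n2 n3 s A B (c div s + 1)) 0 0 w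
      + tfft n3 (gka n1 n2 n3 s A B (c div s + 1)) 0 0 w * tfft n3 (gkV n1 n2 n3 s A B (c div s + 1 - 1)) i (c mod s) w"
      by (rule F2[OF n w nbV]) (use d in auto)
    finally show "tfft n3 (tprod n1 n3 (ttrans n3 A) (bbU n1 n2 n3 s A B k)) i c w = tfft n3 (tprod (k * s) n3 (bbV n1 n2 n3 s A B k)
              (tkron s s n3 (ttrans n3 (gkC n1 n2 n3 s A B k)) tid)) i c w"
      using R3[OF n w c] by simp
  qed
  have c4: "teq n1 s n3 B
           (tprod ((k + 1) * s) n3 (bbU n1 n2 n3 s A B (k + 1))
              (tkron s s n3 (tprod 1 n3 E1 (gka n1 n2 n3 s A B 1)) tid))"
  proof (rule teq_fft[OF n])
    fix i c w assume i: "i < n1" and c: "c < s" and w: "w < n3"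
    have s: "0 < s" using c by simp
    have "tfft n3 (tprod ((k + 1) * s) n3 (bbU n1 n2 n3 s A B (k + 1))
              (tkron s s n3 (tprod 1 n3 E1 (gka n1 n2 n3 s A B 1)) tid)) i c w
       = (\<Sum>r<k + 1. tfft n3 (bbU n1 n2 n3 s A B (k + 1)) i (r * s + c mod s) w *
             tfft n3 (tprod 1 n3 E1 (gka n1 n2 n3 s A B 1)) r (c div s) w)"
      by (rule block[OF n s w])
    also have "\<dots> = (\<Sum>r<k + 1. if r = 0 then tfft n3 (gkU n1 n2 n3 s A B 1) i c w * tfft n3 (gka n1 n2 n3 s A B 1) 0 0 w else 0)"
      using c by (intro sum.cong refl) (simp add: fft_bbU fft_tprod[OF n w] fft_E1[OF n] divmod_aux)
    also have "\<dots> = tfft n3 B i c w" using F0[OF n w nbB] by (simp add: sum.delta)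
    finally show "tfft n3 B i c w = tfft n3 (tprod ((k + 1) * s) n3 (bbU n1 n2 n3 s A B (k + 1))
              (tkron s s n3 (tprod 1 n3 E1 (gka n1 n2 n3 s A B 1)) tid)) i c w" by simp
  qed
  show ?thesis using c1 c2 c3 c4 by blast
qed

end
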